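(* Let $t,s$ be two trees of $\mathcal{A}$ different from $|$, let $k$ be the number of internal vertices on the right-most branch of $t$ and $l$ the number of internal vertices on the left-most branch of $s$. Then $$t*s=\sum_{\sigma\in\mathrm{QSh}(k,l)}\sigma(t,s).$$
   Context: Trees: planar rooted trees in which every internal vertex has at least two children; the root vertex hangs from a trunk edge; leaves are edges without upper vertex; $|$ is the one-leaf tree. $\mathcal A$ is the $\mathbb K$-vector space with basis these trees, with products defined recursively: $x_0\vee\cdots\vee x_k$ ($k\ge1$) grafts trees left to right on a new root vertex; for $x=x^{(0)}\vee\cdots\vee x^{(k)}$, $y=y^{(0)}\vee\cdots\vee y^{(l)}$: $x\prec y=x^{(0)}\vee\cdots\vee x^{(k-1)}\vee(x^{(k)}*y)$, $x\cdot y=x^{(0)}\vee\cdots\vee x^{(k-1)}\vee(x^{(k)}*y^{(0)})\vee y^{(1)}\vee\cdots\vee y^{(l)}$, $x\succ y=(x*y^{(0)})\vee y^{(1)}\vee\cdots\vee y^{(l)}$, with $*=\prec+\cdot+\succ$ and $|*z=z*|=z$. A $(k,l)$-quasi-shuffle is a surjection $\sigma:\{1,\dots,k+l\}\to\{1,\dots,n\}$ (for some $n$) with $\sigma(1)<\cdots<\sigma(k)$ and $\sigma(k+1)<\cdots<\sigma(k+l)$; $\mathrm{QSh}(k,l)$ is their set. Comb representations: the right-most branch of $t$ is the path from the root always going to the right-most child; let $v_1,\dots,v_k$ be its internal vertices (from the root up) and $F_i$ the (nonempty) forest of subtrees rooted at the children of $v_i$ other than its right-most child. Likewise let $w_1,\dots,w_l$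 be the internal vertices on the left-most branch of $s$ and $F_{k+j}$ the forest of subtrees rooted at the children of $w_j$ other than its left-most child. For $\sigma\in\mathrm{QSh}(k,l)$ with image $\{1,\dots,n\}$, $\sigma(t,s)$ is the tree built from a ladder of internal vertices $u_1$ (root), $u_2,\dots,u_n$, $u_{p+1}$ a child of $u_p$ and the ladder child of $u_n$ a leaf, where the children of $u_p$ are, from left to right: the trees of $F_i$ if $\sigma(i)=p$ for some $i\le k$, then the ladder child, then the trees of $F_{k+j}$ if $\sigma(k+j)=p$ for some $j\le l$. *)

theory Defs
  imports Main "HOL-Library.Poly_Mapping"
begin

text \<open>A tree is either the one-leaf tree (Leaf, written | in the paper) or a root
vertex with an ordered (left-to-right) list of subtrees grafted on it.\<close>

datatype tree = Leaf | Node "tree list"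

fun valid :: "tree \<Rightarrow> bool" where
  "valid Leaf = True"
| "valid (Node ts) = (2 \<le> length ts \<and> (\<forall>u\<in>set ts. valid u))"

definition lin_map :: "(tree \<Rightarrow> tree) \<Rightarrow> (tree \<Rightarrow>\<^sub>0 'k::comm_ring_1) \<Rightarrow> (tree \<Rightarrow>\<^sub>0 'k)" where
  "lin_map f v = (\<Sum>u\<in>Poly_Mapping.keys v. Poly_Mapping.single (f u) (Poly_Mapping.lookup v u))"

lemma size_last_less: "xs \<noteq> [] \<Longrightarrow> size (last xs) < Suc (size_list size xs)"
  by (induction xs) auto

lemma size_hd_less: "xs \<noteq> [] \<Longrightarrow> size (hd xs) < Suc (size_list size xs)"
  by (cases xs) auto

lemma size_last_hd_less:
  "xs \<noteq> [] \<Longrightarrow> ys \<noteq> [] \<Longrightarrow>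
   size (last xs) + size (hd ys) < Suc (Suc (size_list size xs + size_list size ys))"
  using size_last_less[of xs] size_hd_less[of ys] by linarith

text \<open>star x y = x * y = (x \<prec> y) + (x \<cdot> y) + (x \<succ> y) on basis trees, where for
x = x0 v ... v xk and y = y0 v ... v yl:
  x \<prec> y = x0 v ... v x(k-1) v (xk * y)
  x \<cdot> y = x0 v ... v x(k-1) v (xk * y0) v y1 v ... v yl
  x \<succ> y = (x * y0) v y1 v ... v yl
and | * z = z * | = z.\<close>

function star :: "tree \<Rightarrow> tree \<Rightarrow> (tree \<Rightarrow>\<^sub>0 'k::comm_ring_1)" where
  "star Leaf y = Poly_Mapping.single y 1"
| "star (Node xs) Leaf = Poly_Mapping.single (Node xs) 1"
| "star (Node xs) (Node ys) =
     (if xs = [] \<or> ys = [] then 0 else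
        lin_map (\<lambda>u. Node (butlast xs @ [u])) (star (last xs) (Node ys))
      + lin_map (\<lambda>u. Node (butlast xs @ [u] @ tl ys)) (star (last xs) (hd ys))
      + lin_map (\<lambda>u. Node (u # tl ys)) (star (Node xs) (hd ys)))"
  by pat_completeness auto
termination
  by (relation "measure (\<lambda>(x, y). size x + size y)")
     (auto dest: size_last_less size_hd_less intro: size_last_hd_less)

text \<open>(k,l)-quasi-shuffles as functions nat => nat, fixed to 0 outside {1..k+l}.\<close>
definition QSh :: "nat \<Rightarrow> nat \<Rightarrow> (nat \<Rightarrow> nat) set" where
  "QSh k l = {\<sigma>. (\<exists>n. \<sigma> ` {1..k+l} = {1..n})
                 \<and> strict_mono_on {1..k} \<sigma>
                 \<and> strict_mono_on {k+1..k+l} \<sigma>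
                 \<and> (\<forall>i. i \<notin> {1..k+l} \<longrightarrow> \<sigma> i = 0)}"

text \<open>rcomb t = [F_1, ..., F_k]: for each internal vertex v_i on the right-most
branch (from the root up), the forest of children of v_i other than the right-most
one. Its length is the number k of internal vertices on the right-most branch.\<close>
function rcomb :: "tree \<Rightarrow> tree list list" where
  "rcomb Leaf = []"
| "rcomb (Node ts) = (if ts = [] then [] else butlast ts # rcomb (last ts))"
  by pat_completeness auto
termination
  by (relation "measure size") (auto dest: size_last_less)

text \<open>lcomb s = [F_{k+1}, ..., F_{k+l}] for the left-most branch of s.\<close>
function lcomb :: "tree \<Rightarrow> tree list list" where
  "lcomb Leaf = []"
| "lcomb (Node ts) = (if ts = [] then [] else tl ts # lcomb (hd ts))"
  by pat_completeness auto
termination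
  by (relation "measure size") (auto dest: size_hd_less)

fun ladder :: "(nat \<Rightarrow> tree list) \<Rightarrow> (nat \<Rightarrow> tree list) \<Rightarrow> nat \<Rightarrow> nat \<Rightarrow> tree" where
  "ladder L R p 0 = Leaf"
| "ladder L R p (Suc m) = Node (L p @ [ladder L R (Suc p) m] @ R p)"

definition qsh_tree :: "(nat \<Rightarrow> nat) \<Rightarrow> tree \<Rightarrow> tree \<Rightarrow> tree" where
  "qsh_tree \<sigma> t s =
     (let k = length (rcomb t); l = length (lcomb s);
          n = card (\<sigma> ` {1..k+l});
          L = (\<lambda>p. concat (map (\<lambda>i. rcomb t ! (i - 1)) (filter (\<lambda>i. \<sigma> i = p) [1..<k+1])));
          R = (\<lambda>p. concat (map (\<lambda>j. lcomb s ! (j - 1)) (filter (\<lambda>j. \<sigma> (k + j) = p) [1..<l+1])))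
      in ladder L R 1 n)"

end

theory Submission
  imports Defs
begin


lemma lin_map_superset:
  assumes "finite U" "Poly_Mapping.keys v \<subseteq> U"
  shows "lin_map f v = (\<Sum>u\<in>U. Poly_Mapping.single (f u) (Poly_Mapping.lookup v u))"
  unfolding lin_map_def
  by (rule sum.mono_neutral_left) (use assms in \<open>auto simp: in_keys_iff\<close>)

lemma lin_map_add: "lin_map f (a + b) = lin_map f a + lin_map f b"
proof -
  let ?U = "Poly_Mapping.keys a \<union> Poly_Mapping.keys b \<union> Poly_Mapping.keys (a + b)"
  have "lin_map f (a + b) = (\<Sum>u\<in>?U. Poly_Mapping.single (f u) (Poly_Mapping.lookup (a+b) u))"
    by (rule lin_map_superset) auto
  also have "\<dots> = (\<Sum>u\<in>?U. Poly_Mapping.single (f u) (Poly_Mapping.lookup a u))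
      + (\<Sum>u\<in>?U. Poly_Mapping.single (f u) (Poly_Mapping.lookup b u))"
    by (simp add: lookup_add single_add sum.distrib)
  also have "\<dots> = lin_map f a + lin_map f b"
    by (subst (1 2) lin_map_superset[where U = ?U]) auto
  finally show ?thesis .
qed

lemma lin_map_zero: "lin_map f 0 = 0"
  by (simp add: lin_map_def)

lemma lin_map_single: "lin_map f (Poly_Mapping.single x c) = Poly_Mapping.single (f x) c"
  by (subst lin_map_superset[where U = "{x}"]) auto

lemma lin_map_sum: "lin_map f (\<Sum>x\<in>S. g x) = (\<Sum>x\<in>S. lin_map f (g x))"
  by (induction S rule: infinite_finite_induct) (auto simp: lin_map_zero lin_map_add)


lemma ladder_shift:
  assumes "\<And>q. q \<ge> 1 \<Longrightarrow> L' (Suc q) = L q \<and> R' (Suc q) = R q" "p \<ge> 1"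
  shows "ladder L' R' (Suc p) n = ladder L R p n"
  using assms(2)
proof (induction n arbitrary: p)
  case 0 then show ?case by simp
next
  case (Suc n)
  have "L' (Suc p) = L p" "R' (Suc p) = R p" using assms(1) Suc.prems by auto
  moreover have "ladder L' R' (Suc (Suc p)) n = ladder L R (Suc p) n" using Suc.IH Suc.prems by simp
  ultimately show ?case by simp
qed

lemma side_lemma:
  assumes f1: "\<And>j. 1 \<le> j \<Longrightarrow> j \<le> c \<Longrightarrow> f j = 1"
    and f2: "\<And>j. 1 \<le> j \<Longrightarrow> j \<le> m \<Longrightarrow> f (j + c) = Suc (g j)"
    and g0: "\<And>j. 1 \<le> j \<Longrightarrow> j \<le> m \<Longrightarrow> g j \<noteq> 0"
    and len: "length X = m"
  shows "concat (map (\<lambda>j. (replicate c Y @ X) ! (j - 1)) (filter (\<lambda>j. f j = Suc q) [1..<c+m+1]))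
       = (if q = 0 then concat (replicate c Y) else concat (map (\<lambda>j. X ! (j - 1)) (filter (\<lambda>j. g j = q) [1..<m+1])))"
proof -
  have split: "[1..<c+m+1] = [1..<c+1] @ map (\<lambda>j. j + c) [1..<m+1]"
  proof -
    have "[1..<c+m+1] = [1..<c+1] @ [c+1..<c+m+1]"
      using upt_add_eq_append[of 1 "c+1" m] by (simp add: add_ac)
    also have "[c+1..<c+m+1] = map (\<lambda>j. j + c) [1..<m+1]"
      by (induction m) (auto simp: add_ac)
    finally show ?thesis .
  qed
  have A: "filter (\<lambda>j. f j = Suc q) [1..<c+1] = (if q = 0 then [1..<c+1] else [])"
    using f1 by (auto intro: filter_True filter_False)
  have B: "filter (\<lambda>j. f j = Suc q) (map (\<lambda>j. j + c) [1..<m+1])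
         = map (\<lambda>j. j + c) (filter (\<lambda>j. g j = q) [1..<m+1])"
    unfolding filter_map o_def by (rule arg_cong[where f="map _"], rule filter_cong) (auto simp: f2)
  have C: "filter (\<lambda>j. g j = 0) [1..<m+1] = []"
    using g0 by (intro filter_False) fastforce
  have D: "map (\<lambda>j. (replicate c Y @ X) ! (j - 1)) [1..<c+1] = replicate c Y"
    by (rule nth_equalityI) (auto simp: nth_append)
  have E: "map (\<lambda>j. (replicate c Y @ X) ! (j - 1)) (map (\<lambda>j. j + c) xs) = map (\<lambda>j. X ! (j - 1)) xs"
    if "\<forall>j\<in>set xs. j \<ge> 1" for xs
    using that by (auto simp: nth_append)
  have E': "map (\<lambda>j. (replicate c Y @ X) ! (j - 1)) (map (\<lambda>j. j + c) (filter (\<lambda>j. g j = q) [1..<m+1]))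
     = map (\<lambda>j. X ! (j - 1)) (filter (\<lambda>j. g j = q) [1..<m+1])"
    by (rule E) auto
  show ?thesis
  proof (cases "q = 0")
    case True
    then show ?thesis unfolding split filter_append A B map_append concat_append E'
      by (simp only: C True if_True D) simp
  next
    case False
    then show ?thesis unfolding split filter_append A B map_append concat_append E'
      by simp
  qed
qed


lemma qsh_pos: "\<sigma> \<in> QSh k l \<Longrightarrow> 1 \<le> i \<Longrightarrow> i \<le> k + l \<Longrightarrow> 1 \<le> \<sigma> i"
  unfolding QSh_def by (auto simp: image_subset_iff)

lemma qsh_zero: "\<sigma> \<in> QSh k l \<Longrightarrow> i = 0 \<or> k + l < i \<Longrightarrow> \<sigma> i = 0"
  unfolding QSh_def by auto

lemma qsh_image: "\<sigma> \<in> QSh k l \<Longrightarrow> \<exists>n. \<sigma> ` {1..k+l} = {1..n}"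
  unfolding QSh_def by auto

lemma qsh_mono1: "\<sigma> \<in> QSh k l \<Longrightarrow> 1 \<le> i \<Longrightarrow> i < j \<Longrightarrow> j \<le> k \<Longrightarrow> \<sigma> i < \<sigma> j"
  unfolding QSh_def strict_mono_on_def by auto

lemma qsh_mono2: "\<sigma> \<in> QSh k l \<Longrightarrow> k < i \<Longrightarrow> i < j \<Longrightarrow> j \<le> k + l \<Longrightarrow> \<sigma> i < \<sigma> j"
  unfolding QSh_def strict_mono_on_def by auto

lemma QSh_intro:
  assumes "\<sigma> ` {1..k+l} = {1..n}"
    and "\<And>i j. 1 \<le> i \<Longrightarrow> i < j \<Longrightarrow> j \<le> k \<Longrightarrow> \<sigma> i < \<sigma> j"
    and "\<And>i j. k < i \<Longrightarrow> i < j \<Longrightarrow> j \<le> k + l \<Longrightarrow> \<sigma> i < \<sigma> j"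
    and "\<And>i. i = 0 \<or> k + l < i \<Longrightarrow> \<sigma> i = 0"
  shows "\<sigma> \<in> QSh k l"
  unfolding QSh_def strict_mono_on_def using assms by auto

lemma qsh_one: "\<sigma> \<in> QSh k l \<Longrightarrow> 0 < k + l \<Longrightarrow> (0 < k \<and> \<sigma> 1 = 1) \<or> (0 < l \<and> \<sigma> (k+1) = 1)"
proof -
  assume s: "\<sigma> \<in> QSh k l" and kl: "0 < k + l"
  obtain n where n: "\<sigma> ` {1..k+l} = {1..n}" using qsh_image[OF s] by blast
  have "n \<ge> 1"
  proof (rule ccontr)
    assume "\<not> n \<ge> 1"
    then have "{1..n} = {}" by auto
    with n kl show False by auto
  qed
  then have "1 \<in> \<sigma> ` {1..k+l}" using n by auto
  then obtain i where i: "1 \<le> i" "i \<le> k + l" "\<sigma> i = 1" by auto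
  show ?thesis
  proof (cases "i \<le> k")
    case True
    have "\<sigma> 1 \<le> \<sigma> i"
      using qsh_mono1[OF s, of 1 i] True i by (cases "i = 1") auto
    moreover have "1 \<le> \<sigma> 1" using qsh_pos[OF s, of 1] True i by auto
    ultimately show ?thesis using True i by auto
  next
    case False
    have "\<sigma> (k+1) \<le> \<sigma> i"
      using qsh_mono2[OF s, of "k+1" i] False i by (cases "i = k+1") auto
    moreover have "1 \<le> \<sigma> (k+1)" using qsh_pos[OF s, of "k+1"] False i by auto
    ultimately have "\<sigma> (k+1) = 1" using i by linarith
    moreover have "0 < l" using False i by linarith
    ultimately show ?thesis by blast
  qed
qed

lemma finite_QSh: "finite (QSh k l)"
proof -
  have "QSh k l \<subseteq> {f. \<forall>x. (x \<in> {1..k+l} \<longrightarrow> f x \<in> {0..k+l}) \<and> (x \<notin> {1..k+l} \<longrightarrow> f x = 0)}"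
  proof safe
    fix \<sigma> x assume s: "\<sigma> \<in> QSh k l" and x: "x \<in> {1..k+l}"
    obtain n where n: "\<sigma> ` {1..k+l} = {1..n}" using qsh_image[OF s] by blast
    have "n = card (\<sigma> ` {1..k+l})" using n by simp
    also have "\<dots> \<le> k + l" using card_image_le[of "{1..k+l}" \<sigma>] by simp
    finally have "n \<le> k + l" .
    moreover have "\<sigma> x \<in> {1..n}" using n x by blast
    ultimately show "\<sigma> x \<in> {0..k+l}" by auto
  next
    fix \<sigma> x assume s: "\<sigma> \<in> QSh k l" and x: "x \<notin> {1..k+l}"
    then show "\<sigma> x = 0" using qsh_zero[OF s, of x] by auto
  qed
  then show ?thesis by (rule finite_subset) (intro finite_set_of_finite_funs; simp)
qed

definition qext :: "nat \<Rightarrow> nat \<Rightarrow> nat \<Rightarrow> nat \<Rightarrow> (nat \<Rightarrow> nat) \<Rightarrow> nat \<Rightarrow> nat" where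
  "qext a b k l \<sigma> i = (if i = 0 then 0 else if i \<le> a then 1 else if i \<le> k + a then Suc (\<sigma> (i - a))
     else if i \<le> k + a + b then 1 else if i \<le> k + a + b + l then Suc (\<sigma> (i - a - b)) else 0)"

definition qres :: "nat \<Rightarrow> nat \<Rightarrow> nat \<Rightarrow> nat \<Rightarrow> (nat \<Rightarrow> nat) \<Rightarrow> nat \<Rightarrow> nat" where
  "qres a b k l \<tau> i = (if i = 0 then 0 else if i \<le> k then \<tau> (i + a) - 1
     else if i \<le> k + l then \<tau> (i + a + b) - 1 else 0)"

definition Sab :: "nat \<Rightarrow> nat \<Rightarrow> nat \<Rightarrow> nat \<Rightarrow> (nat \<Rightarrow> nat) set" where
  "Sab a b k l = {\<tau> \<in> QSh (k+a) (l+b). (0 < k + a \<longrightarrow> (\<tau> 1 = 1 \<longleftrightarrow> a = 1))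
                    \<and> (0 < l + b \<longrightarrow> (\<tau> (k+a+1) = 1 \<longleftrightarrow> b = 1))}"

lemma qext_0: "qext a b k l \<sigma> 0 = 0" by (simp add: qext_def)
lemma qext_A: "1 \<le> i \<Longrightarrow> i \<le> a \<Longrightarrow> qext a b k l \<sigma> i = 1" by (simp add: qext_def)
lemma qext_F: "a < i \<Longrightarrow> i \<le> k + a \<Longrightarrow> qext a b k l \<sigma> i = Suc (\<sigma> (i - a))" by (simp add: qext_def)
lemma qext_B: "k + a < i \<Longrightarrow> i \<le> k + a + b \<Longrightarrow> qext a b k l \<sigma> i = 1" by (simp add: qext_def)
lemma qext_G: "k + a + b < i \<Longrightarrow> i \<le> k + a + b + l \<Longrightarrow> qext a b k l \<sigma> i = Suc (\<sigma> (i - a - b))" by (simp add: qext_def)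
lemma qext_out: "k + a + b + l < i \<Longrightarrow> qext a b k l \<sigma> i = 0" by (simp add: qext_def)

lemma qext_image:
  assumes ab: "a \<le> 1" "b \<le> 1" "0 < a + b"
  shows "qext a b k l \<sigma> ` {1..k+a+(l+b)} = insert 1 (Suc ` \<sigma> ` {1..k+l})"
proof (rule set_eqI, rule iffI)
  fix x assume "x \<in> qext a b k l \<sigma> ` {1..k+a+(l+b)}"
  then obtain i where i: "1 \<le> i" "i \<le> k+a+(l+b)" "x = qext a b k l \<sigma> i" by auto
  consider "i \<le> a" | "a < i" "i \<le> k + a" | "k + a < i" "i \<le> k + a + b" | "k + a + b < i" by linarith
  then show "x \<in> insert 1 (Suc ` \<sigma> ` {1..k+l})"
  proof cases
    case 1 then show ?thesis using i by (simp add: qext_A)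
  next
    case 2
    then have "x = Suc (\<sigma> (i - a))" "i - a \<in> {1..k+l}" using i by (auto simp: qext_F)
    then show ?thesis by blast
  next
    case 3 then show ?thesis using i by (simp add: qext_B)
  next
    case 4
    then have "x = Suc (\<sigma> (i - a - b))" "i - a - b \<in> {1..k+l}" using i by (auto simp: qext_G)
    then show ?thesis by blast
  qed
next
  fix x assume x: "x \<in> insert 1 (Suc ` \<sigma> ` {1..k+l})"
  show "x \<in> qext a b k l \<sigma> ` {1..k+a+(l+b)}"
  proof (cases "x = 1")
    case True
    show ?thesis
    proof (cases "a = 1")
      case True
      then have "qext a b k l \<sigma> 1 = x" "1 \<in> {1..k+a+(l+b)}" using \<open>x = 1\<close> by (auto simp: qext_A)
      then show ?thesis by (rule image_eqI[OF sym])
    next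
      case False
      then have "qext a b k l \<sigma> (k+a+1) = x" "k+a+1 \<in> {1..k+a+(l+b)}" using ab \<open>x = 1\<close> by (auto simp: qext_B)
      then show ?thesis by (rule image_eqI[OF sym])
    qed
  next
    case False
    then have "x \<in> Suc ` \<sigma> ` {1..k+l}" using x by simp
    then obtain j where j: "j \<in> {1..k+l}" "x = Suc (\<sigma> j)" by auto
    then have j: "1 \<le> j" "j \<le> k + l" "x = Suc (\<sigma> j)" by auto
    show ?thesis
    proof (cases "j \<le> k")
      case True
      then have "qext a b k l \<sigma> (j+a) = x" "j+a \<in> {1..k+a+(l+b)}" using j by (auto simp: qext_F)
      then show ?thesis by (rule image_eqI[OF sym])
    next
      case False
      then have "qext a b k l \<sigma> (j+a+b) = x" "j+a+b \<in> {1..k+a+(l+b)}" using j by (auto simp: qext_G)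
      then show ?thesis by (rule image_eqI[OF sym])
    qed
  qed
qed

lemma qext_in:
  assumes ab: "a \<le> 1" "b \<le> 1" "0 < a + b" and s: "\<sigma> \<in> QSh k l"
  shows "qext a b k l \<sigma> \<in> Sab a b k l"
proof -
  obtain n where n: "\<sigma> ` {1..k+l} = {1..n}" using qsh_image[OF s] by blast
  have img: "qext a b k l \<sigma> ` {1..k+a+(l+b)} = {1..Suc n}"
    unfolding qext_image[OF ab] n image_Suc_atLeastAtMost by auto
  have pos: "\<And>i. 1 \<le> i \<Longrightarrow> i \<le> k + l \<Longrightarrow> 1 \<le> \<sigma> i" using qsh_pos[OF s] by blast
  have m1: "qext a b k l \<sigma> i < qext a b k l \<sigma> j" if "1 \<le> i" "i < j" "j \<le> k + a" for i j
  proof (cases "i \<le> a")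
    case True
    have "1 \<le> \<sigma> (j - a)" by (rule pos) (use that True ab in auto)
    moreover have "qext a b k l \<sigma> i = 1" using True that by (simp add: qext_A)
    moreover have "qext a b k l \<sigma> j = Suc (\<sigma> (j - a))" using True that ab by (intro qext_F) auto
    ultimately show ?thesis by simp
  next
    case False
    have "\<sigma> (i - a) < \<sigma> (j - a)" using that False by (intro qsh_mono1[OF s]) auto
    then show ?thesis using that False by (simp add: qext_F)
  qed
  have m2: "qext a b k l \<sigma> i < qext a b k l \<sigma> j" if "k + a < i" "i < j" "j \<le> k + a + (l + b)" for i j
  proof (cases "i \<le> k + a + b")
    case True
    have "1 \<le> \<sigma> (j - a - b)" by (rule pos) (use that True ab in auto)
    moreover have "qext a b k l \<sigma> i = 1" using True that by (simp add: qext_B)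
    moreover have "qext a b k l \<sigma> j = Suc (\<sigma> (j - a - b))" using True that ab by (intro qext_G) auto
    ultimately show ?thesis by simp
  next
    case False
    have "\<sigma> (i - a - b) < \<sigma> (j - a - b)" using that False by (intro qsh_mono2[OF s]) auto
    then show ?thesis using that False by (simp add: qext_G)
  qed
  have inq: "qext a b k l \<sigma> \<in> QSh (k+a) (l+b)"
  proof (rule QSh_intro[OF img m1 m2])
    fix i :: nat assume "i = 0 \<or> k + a + (l + b) < i"
    then show "qext a b k l \<sigma> i = 0" by (auto simp: qext_0 qext_out)
  qed
  have c1: "qext a b k l \<sigma> 1 = 1 \<longleftrightarrow> a = 1" if "0 < k + a"
  proof (cases "a = 1")
    case True then show ?thesis by (simp add: qext_A)
  next
    case False
    then have "a = 0" "0 < k" using ab that by auto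
    then show ?thesis using pos[of 1] by (simp add: qext_F)
  qed
  have c2: "qext a b k l \<sigma> (k+a+1) = 1 \<longleftrightarrow> b = 1" if "0 < l + b"
  proof (cases "b = 1")
    case True then show ?thesis by (simp add: qext_B)
  next
    case False
    then have "b = 0" "0 < l" using ab that by auto
    then show ?thesis using pos[of "k+1"] by (simp add: qext_G)
  qed
  show ?thesis unfolding Sab_def using inq c1 c2 by blast
qed



lemma Sab_facts:
  assumes ab: "a \<le> 1" "b \<le> 1" "0 < a + b" and t: "\<tau> \<in> Sab a b k l"
  shows Sab_QSh: "\<tau> \<in> QSh (k+a) (l+b)"
    and Sab_pos: "\<And>i. 1 \<le> i \<Longrightarrow> i \<le> k+a+(l+b) \<Longrightarrow> 1 \<le> \<tau> i"
    and Sab_slotA: "\<And>i. 1 \<le> i \<Longrightarrow> i \<le> a \<Longrightarrow> \<tau> i = 1"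
    and Sab_slotB: "\<And>i. k + a < i \<Longrightarrow> i \<le> k + a + b \<Longrightarrow> \<tau> i = 1"
    and Sab_two1: "\<And>i. a < i \<Longrightarrow> i \<le> k + a \<Longrightarrow> 2 \<le> \<tau> i"
    and Sab_two2: "\<And>i. k + a + b < i \<Longrightarrow> i \<le> k+a+(l+b) \<Longrightarrow> 2 \<le> \<tau> i"
proof -
  have q: "\<tau> \<in> QSh (k+a) (l+b)" and c1: "0 < k + a \<Longrightarrow> (\<tau> 1 = 1 \<longleftrightarrow> a = 1)"
    and c2: "0 < l + b \<Longrightarrow> (\<tau> (k+a+1) = 1 \<longleftrightarrow> b = 1)"
    using t unfolding Sab_def by auto
  show "\<tau> \<in> QSh (k+a) (l+b)" by (rule q)
  show pos: "\<And>i. 1 \<le> i \<Longrightarrow> i \<le> k+a+(l+b) \<Longrightarrow> 1 \<le> \<tau> i"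
    using qsh_pos[OF q] by blast
  show "\<And>i. 1 \<le> i \<Longrightarrow> i \<le> a \<Longrightarrow> \<tau> i = 1"
  proof -
    fix i assume "1 \<le> i" "i \<le> a"
    then have "i = 1" "a = 1" using ab by auto
    then show "\<tau> i = 1" using c1 by auto
  qed
  show "\<And>i. k + a < i \<Longrightarrow> i \<le> k + a + b \<Longrightarrow> \<tau> i = 1"
  proof -
    fix i assume "k + a < i" "i \<le> k + a + b"
    then have "i = k + a + 1" "b = 1" using ab by auto
    then show "\<tau> i = 1" using c2 by auto
  qed
  show "\<And>i. a < i \<Longrightarrow> i \<le> k + a \<Longrightarrow> 2 \<le> \<tau> i"
  proof -
    fix i assume i: "a < i" "i \<le> k + a"
    show "2 \<le> \<tau> i"
    proof (cases "i = 1")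
      case True
      then have "a = 0" using i by auto
      then have "\<tau> 1 \<noteq> 1" using c1 i by auto
      moreover have "1 \<le> \<tau> 1" using pos[of 1] i by auto
      ultimately show ?thesis using True by auto
    next
      case False
      then have "\<tau> 1 < \<tau> i" using i by (intro qsh_mono1[OF q]) auto
      moreover have "1 \<le> \<tau> 1" using pos[of 1] i by auto
      ultimately show ?thesis by auto
    qed
  qed
  show "\<And>i. k + a + b < i \<Longrightarrow> i \<le> k+a+(l+b) \<Longrightarrow> 2 \<le> \<tau> i"
  proof -
    fix i assume i: "k + a + b < i" "i \<le> k+a+(l+b)"
    show "2 \<le> \<tau> i"
    proof (cases "i = k + a + 1")
      case True
      then have "b = 0" using i by auto
      then have "\<tau> (k+a+1) \<noteq> 1" using c2 i by auto
      moreover have "1 \<le> \<tau> (k+a+1)" using pos[of "k+a+1"] i by auto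
      ultimately show ?thesis using True by auto
    next
      case False
      then have "\<tau> (k+a+1) < \<tau> i" using i by (intro qsh_mono2[OF q]) auto
      moreover have "1 \<le> \<tau> (k+a+1)" using pos[of "k+a+1"] i by auto
      ultimately show ?thesis by auto
    qed
  qed
qed

lemma qres_in:
  assumes ab: "a \<le> 1" "b \<le> 1" "0 < a + b" and t: "\<tau> \<in> Sab a b k l"
  shows "qres a b k l \<tau> \<in> QSh k l"
proof -
  note q = Sab_QSh[OF ab t]
  note pos = Sab_pos[OF ab t] and sA = Sab_slotA[OF ab t] and sB = Sab_slotB[OF ab t]
  note two1 = Sab_two1[OF ab t] and two2 = Sab_two2[OF ab t]
  obtain N where N: "\<tau> ` {1..k+a+(l+b)} = {1..N}" using qsh_image[OF q] by blast
  have r1: "qres a b k l \<tau> i = \<tau> (i + a) - 1" if "1 \<le> i" "i \<le> k" for i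
    using that by (simp add: qres_def)
  have r2: "qres a b k l \<tau> i = \<tau> (i + a + b) - 1" if "k < i" "i \<le> k + l" for i
    using that by (simp add: qres_def)
  have img: "qres a b k l \<tau> ` {1..k+l} = {1..N - 1}"
  proof (rule set_eqI, rule iffI)
    fix y assume "y \<in> qres a b k l \<tau> ` {1..k+l}"
    then obtain i where i: "1 \<le> i" "i \<le> k + l" "y = qres a b k l \<tau> i" by auto
    show "y \<in> {1..N - 1}"
    proof (cases "i \<le> k")
      case True
      have "\<tau> (i + a) \<in> {1..N}" using N i True by (intro equalityD1[OF N, THEN subsetD]) auto
      moreover have "2 \<le> \<tau> (i + a)" using two1[of "i + a"] i True by auto
      ultimately show ?thesis using r1[of i] i True by auto
    next
      case False
      have "\<tau> (i + a + b) \<in> {1..N}" using N i False by (intro equalityD1[OF N, THEN subsetD]) auto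
      moreover have "2 \<le> \<tau> (i + a + b)" using two2[of "i + a + b"] i False by auto
      ultimately show ?thesis using r2[of i] i False by auto
    qed
  next
    fix y assume y: "y \<in> {1..N - 1}"
    then have "Suc y \<in> \<tau> ` {1..k+a+(l+b)}" unfolding N by auto
    then obtain j where j: "j \<in> {1..k+a+(l+b)}" "\<tau> j = Suc y" by auto
    have ns1: "\<not> j \<le> a" using sA[of j] j y by auto
    have ns2: "\<not> (k + a < j \<and> j \<le> k + a + b)" using sB[of j] j y by auto
    show "y \<in> qres a b k l \<tau> ` {1..k+l}"
    proof (cases "j \<le> k + a")
      case True
      then have "qres a b k l \<tau> (j - a) = y" "j - a \<in> {1..k+l}" using r1[of "j - a"] j ns1 by auto
      then show ?thesis by (rule image_eqI[OF sym])
    next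
      case False
      then have "qres a b k l \<tau> (j - a - b) = y" "j - a - b \<in> {1..k+l}"
        using r2[of "j - a - b"] j ns2 by auto
      then show ?thesis by (rule image_eqI[OF sym])
    qed
  qed
  show ?thesis
  proof (rule QSh_intro[OF img])
    fix i j assume ij: "1 \<le> i" "i < j" "j \<le> k"
    have "\<tau> (i + a) < \<tau> (j + a)" using ij by (intro qsh_mono1[OF q]) auto
    moreover have "1 \<le> \<tau> (i + a)" using pos[of "i + a"] ij by auto
    ultimately show "qres a b k l \<tau> i < qres a b k l \<tau> j" using r1[of i] r1[of j] ij by auto
  next
    fix i j assume ij: "k < i" "i < j" "j \<le> k + l"
    have "\<tau> (i + a + b) < \<tau> (j + a + b)" using ij by (intro qsh_mono2[OF q]) auto
    moreover have "1 \<le> \<tau> (i + a + b)" using pos[of "i + a + b"] ij by auto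
    ultimately show "qres a b k l \<tau> i < qres a b k l \<tau> j" using r2[of i] r2[of j] ij by auto
  next
    fix i :: nat assume "i = 0 \<or> k + l < i"
    then show "qres a b k l \<tau> i = 0" by (auto simp: qres_def)
  qed
qed

lemma qres_qext:
  assumes s: "\<sigma> \<in> QSh k l"
  shows "qres a b k l (qext a b k l \<sigma>) = \<sigma>"
proof
  fix i
  consider "i = 0" | "1 \<le> i" "i \<le> k" | "k < i" "i \<le> k + l" | "k + l < i" by linarith
  then show "qres a b k l (qext a b k l \<sigma>) i = \<sigma> i"
  proof cases
    case 1 then show ?thesis using qsh_zero[OF s, of i] by (simp add: qres_def)
  next
    case 2 then show ?thesis by (simp add: qres_def qext_F)
  next
    case 3
    then have "qext a b k l \<sigma> (i + a + b) = Suc (\<sigma> i)" by (subst qext_G) auto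
    then show ?thesis using 3 by (simp add: qres_def)
  next
    case 4 then show ?thesis using qsh_zero[OF s, of i] by (simp add: qres_def)
  qed
qed

lemma qext_qres:
  assumes ab: "a \<le> 1" "b \<le> 1" "0 < a + b" and t: "\<tau> \<in> Sab a b k l"
  shows "qext a b k l (qres a b k l \<tau>) = \<tau>"
proof
  note q = Sab_QSh[OF ab t]
  note pos = Sab_pos[OF ab t] and sA = Sab_slotA[OF ab t] and sB = Sab_slotB[OF ab t]
  fix i
  consider "i = 0" | "1 \<le> i" "i \<le> a" | "a < i" "i \<le> k + a" | "k + a < i" "i \<le> k + a + b"
    | "k + a + b < i" "i \<le> k + a + b + l" | "k + a + b + l < i" by linarith
  then show "qext a b k l (qres a b k l \<tau>) i = \<tau> i"
  proof cases
    case 1 then show ?thesis using qsh_zero[OF q, of i] by (simp add: qext_0)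
  next
    case 2 then show ?thesis using sA[of i] by (simp add: qext_A)
  next
    case 3
    have "1 \<le> \<tau> i" using pos[of i] 3 by auto
    moreover have "qres a b k l \<tau> (i - a) = \<tau> i - 1" using 3 by (simp add: qres_def)
    ultimately show ?thesis using 3 by (simp add: qext_F)
  next
    case 4 then show ?thesis using sB[of i] by (simp add: qext_B)
  next
    case 5
    have "1 \<le> \<tau> i" using pos[of i] 5 by auto
    moreover have "qres a b k l \<tau> (i - a - b) = \<tau> i - 1" using 5 by (simp add: qres_def)
    ultimately show ?thesis using 5 by (simp add: qext_G)
  next
    case 6 then show ?thesis using qsh_zero[OF q, of i] by (simp add: qext_out)
  qed
qed



definition Qt :: "(nat \<Rightarrow> nat) \<Rightarrow> tree list list \<Rightarrow> tree list list \<Rightarrow> tree" where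
  "Qt \<sigma> A B =
     (let k = length A; l = length B;
          n = card (\<sigma> ` {1..k+l});
          L = (\<lambda>p. concat (map (\<lambda>i. A ! (i - 1)) (filter (\<lambda>i. \<sigma> i = p) [1..<k+1])));
          R = (\<lambda>p. concat (map (\<lambda>j. B ! (j - 1)) (filter (\<lambda>j. \<sigma> (k + j) = p) [1..<l+1])))
      in ladder L R 1 n)"

lemma qsh_tree_Qt: "qsh_tree \<sigma> t s = Qt \<sigma> (rcomb t) (lcomb s)"
  by (simp add: qsh_tree_def Qt_def)

definition Qs :: "tree list list \<Rightarrow> tree list list \<Rightarrow> (tree \<Rightarrow>\<^sub>0 'k::comm_ring_1)" where
  "Qs A B = (\<Sum>\<sigma>\<in>QSh (length A) (length B). Poly_Mapping.single (Qt \<sigma> A B) 1)"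

lemma Qt_qext:
  assumes ab: "a \<le> 1" "b \<le> 1" "0 < a + b" and s: "\<sigma> \<in> QSh k l"
    and lA: "length A = k" and lB: "length B = l"
  shows "Qt (qext a b k l \<sigma>) (replicate a F @ A) (replicate b G @ B)
       = Node (concat (replicate a F) @ [Qt \<sigma> A B] @ concat (replicate b G))"
proof -
  define n where "n = card (\<sigma> ` {1..k+l})"
  define L' where "L' = (\<lambda>p. concat (map (\<lambda>i. (replicate a F @ A) ! (i - 1))
       (filter (\<lambda>i. qext a b k l \<sigma> i = p) [1..<a+k+1])))"
  define R' where "R' = (\<lambda>p. concat (map (\<lambda>j. (replicate b G @ B) ! (j - 1))
       (filter (\<lambda>j. qext a b k l \<sigma> (a + k + j) = p) [1..<b+l+1])))"
  define L where "L = (\<lambda>p. concat (map (\<lambda>i. A ! (i - 1)) (filter (\<lambda>i. \<sigma> i = p) [1..<k+1])))"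
  define R where "R = (\<lambda>p. concat (map (\<lambda>j. B ! (j - 1)) (filter (\<lambda>j. \<sigma> (k + j) = p) [1..<l+1])))"
  have pos: "\<And>i. 1 \<le> i \<Longrightarrow> i \<le> k + l \<Longrightarrow> \<sigma> i \<noteq> 0" using qsh_pos[OF s] by fastforce
  have e: "a+k+(b+l) = k+a+(l+b)" by (simp add: add_ac)
  have "qext a b k l \<sigma> ` {1..a+k+(b+l)} = insert 1 (Suc ` \<sigma> ` {1..k+l})"
    unfolding e by (rule qext_image[OF ab])
  moreover have "1 \<notin> Suc ` \<sigma> ` {1..k+l}" using pos by fastforce
  ultimately have card: "card (qext a b k l \<sigma> ` {1..a+k+(b+l)}) = Suc n"
    unfolding n_def by (simp add: card_image)
  have lhs: "Qt (qext a b k l \<sigma>) (replicate a F @ A) (replicate b G @ B) = ladder L' R' 1 (Suc n)"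
    unfolding Qt_def Let_def L'_def R'_def length_append length_replicate lA lB card ..
  have rhs: "Qt \<sigma> A B = ladder L R 1 n"
    unfolding Qt_def Let_def L_def R_def lA lB n_def ..
  have hL: "L' (Suc q) = (if q = 0 then concat (replicate a F) else L q)" for q
    unfolding L'_def L_def
  proof (rule side_lemma[where c = a and m = k and f = "qext a b k l \<sigma>" and g = \<sigma>])
    show "\<And>j. 1 \<le> j \<Longrightarrow> j \<le> a \<Longrightarrow> qext a b k l \<sigma> j = 1" by (simp add: qext_A)
    show "\<And>j. 1 \<le> j \<Longrightarrow> j \<le> k \<Longrightarrow> qext a b k l \<sigma> (j + a) = Suc (\<sigma> j)" by (simp add: qext_F)
    show "\<And>j. 1 \<le> j \<Longrightarrow> j \<le> k \<Longrightarrow> \<sigma> j \<noteq> 0" using pos by auto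
  qed (rule lA)
  have hR: "R' (Suc q) = (if q = 0 then concat (replicate b G) else R q)" for q
    unfolding R'_def R_def
  proof (rule side_lemma[where c = b and m = l and f = "\<lambda>j. qext a b k l \<sigma> (a + k + j)" and g = "\<lambda>j. \<sigma> (k + j)"])
    show "\<And>j. 1 \<le> j \<Longrightarrow> j \<le> b \<Longrightarrow> qext a b k l \<sigma> (a + k + j) = 1" by (simp add: qext_B)
    show "\<And>j. 1 \<le> j \<Longrightarrow> j \<le> l \<Longrightarrow> qext a b k l \<sigma> (a + k + (j + b)) = Suc (\<sigma> (k + j))"
      by (subst qext_G) auto
    show "\<And>j. 1 \<le> j \<Longrightarrow> j \<le> l \<Longrightarrow> \<sigma> (k + j) \<noteq> 0" using pos by auto
  qed (rule lB)
  have sh: "ladder L' R' (Suc 1) n = ladder L R 1 n"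
    by (rule ladder_shift) (auto simp: hL hR)
  have "ladder L' R' 1 (Suc n) = Node (L' (Suc 0) @ [ladder L' R' (Suc 1) n] @ R' (Suc 0))"
    by simp
  also have "\<dots> = Node (concat (replicate a F) @ [ladder L R 1 n] @ concat (replicate b G))"
    unfolding sh hL hR by simp
  finally show ?thesis using lhs rhs by simp
qed

lemma sum_Sab:
  assumes ab: "a \<le> 1" "b \<le> 1" "0 < a + b" and lA: "length A = k" and lB: "length B = l"
  shows "(\<Sum>\<tau>\<in>Sab a b k l. Poly_Mapping.single (Qt \<tau> (replicate a F @ A) (replicate b G @ B)) (1::'k::comm_ring_1))
       = lin_map (\<lambda>u. Node (concat (replicate a F) @ [u] @ concat (replicate b G))) (Qs A B)"
proof -
  have "(\<Sum>\<tau>\<in>Sab a b k l. Poly_Mapping.single (Qt \<tau> (replicate a F @ A) (replicate b G @ B)) (1::'k))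
      = (\<Sum>\<sigma>\<in>QSh k l. Poly_Mapping.single (Node (concat (replicate a F) @ [Qt \<sigma> A B] @ concat (replicate b G))) 1)"
  proof (rule sum.reindex_bij_witness[where i = "qext a b k l" and j = "qres a b k l"])
    fix \<tau> assume t: "\<tau> \<in> Sab a b k l"
    show "qext a b k l (qres a b k l \<tau>) = \<tau>" by (rule qext_qres[OF ab t])
    show "qres a b k l \<tau> \<in> QSh k l" by (rule qres_in[OF ab t])
    show "Poly_Mapping.single (Node (concat (replicate a F) @ [Qt (qres a b k l \<tau>) A B] @ concat (replicate b G))) 1
        = Poly_Mapping.single (Qt \<tau> (replicate a F @ A) (replicate b G @ B)) (1::'k)"
      using Qt_qext[OF ab qres_in[OF ab t] lA lB, of F G] qext_qres[OF ab t] by simp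
  next
    fix \<sigma> assume s: "\<sigma> \<in> QSh k l"
    show "qres a b k l (qext a b k l \<sigma>) = \<sigma>" by (rule qres_qext[OF s])
    show "qext a b k l \<sigma> \<in> Sab a b k l" by (rule qext_in[OF ab s])
  qed
  also have "\<dots> = lin_map (\<lambda>u. Node (concat (replicate a F) @ [u] @ concat (replicate b G))) (Qs A B)"
    unfolding Qs_def lin_map_sum lin_map_single lA lB ..
  finally show ?thesis .
qed



lemma QSh_0_0: "QSh 0 0 = {\<lambda>_. 0}"
proof
  show "QSh 0 0 \<subseteq> {\<lambda>_. 0}"
  proof
    fix \<sigma> assume s: "\<sigma> \<in> QSh 0 0"
    have "\<sigma> i = 0" for i using qsh_zero[OF s, of i] by auto
    then show "\<sigma> \<in> {\<lambda>_. 0}" by auto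
  qed
  show "{\<lambda>_. 0} \<subseteq> QSh 0 0"
    by (auto intro!: QSh_intro[where n = 0])
qed

lemma Qs_nil_nil: "Qs [] [] = Poly_Mapping.single Leaf 1"
  by (simp add: Qs_def QSh_0_0 Qt_def)

lemma QSh_Suc_0: "QSh (Suc k) 0 = Sab 1 0 k 0"
proof -
  have "\<tau> 1 = 1" if "\<tau> \<in> QSh (Suc k) 0" for \<tau> using qsh_one[OF that] by auto
  then show ?thesis unfolding Sab_def by auto
qed

lemma QSh_0_Suc: "QSh 0 (Suc l) = Sab 0 1 0 l"
proof -
  have "\<tau> 1 = 1" if "\<tau> \<in> QSh 0 (Suc l)" for \<tau> using qsh_one[OF that] by auto
  then show ?thesis unfolding Sab_def by auto
qed

lemma QSh_Suc_Suc: "QSh (Suc k) (Suc l) = Sab 1 0 k (Suc l) \<union> Sab 0 1 (Suc k) l \<union> Sab 1 1 k l"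
proof -
  have "\<tau> 1 = 1 \<or> \<tau> (Suc (Suc k)) = 1" if "\<tau> \<in> QSh (Suc k) (Suc l)" for \<tau> using qsh_one[OF that] by auto
  then show ?thesis unfolding Sab_def by auto
qed

lemma Qs_cons_nil: "Qs (F # A) [] = lin_map (\<lambda>u. Node (F @ [u])) (Qs A [])"
proof -
  have "Qs (F # A) [] = (\<Sum>\<tau>\<in>Sab 1 0 (length A) 0.
      Poly_Mapping.single (Qt \<tau> (replicate 1 F @ A) (replicate 0 F @ [])) 1)"
    unfolding Qs_def by (simp add: QSh_Suc_0)
  also have "\<dots> = lin_map (\<lambda>u. Node (concat (replicate 1 F) @ [u] @ concat (replicate 0 F))) (Qs A [])"
    by (rule sum_Sab) auto
  finally show ?thesis by simp
qed

lemma Qs_nil_cons: "Qs [] (G # B) = lin_map (\<lambda>u. Node (u # G)) (Qs [] B)"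
proof -
  have "Qs [] (G # B) = (\<Sum>\<tau>\<in>Sab 0 1 0 (length B).
      Poly_Mapping.single (Qt \<tau> (replicate 0 G @ []) (replicate 1 G @ B)) 1)"
    unfolding Qs_def by (simp add: QSh_0_Suc)
  also have "\<dots> = lin_map (\<lambda>u. Node (concat (replicate 0 G) @ [u] @ concat (replicate 1 G))) (Qs [] B)"
    by (rule sum_Sab) auto
  finally show ?thesis by simp
qed

lemma Qs_cons_cons: "Qs (F # A) (G # B) =
    lin_map (\<lambda>u. Node (F @ [u])) (Qs A (G # B))
  + lin_map (\<lambda>u. Node (F @ [u] @ G)) (Qs A B)
  + lin_map (\<lambda>u. Node (u # G)) (Qs (F # A) B)"
proof -
  let ?k = "length A" and ?l = "length B"
  let ?g = "\<lambda>\<tau>. Poly_Mapping.single (Qt \<tau> (F # A) (G # B)) (1::'a::comm_ring_1)"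
  have fin: "finite (Sab a b k l)" for a b k l unfolding Sab_def
    by (rule finite_subset[OF _ finite_QSh[of "k+a" "l+b"]]) auto
  have d1: "Sab 1 0 ?k (Suc ?l) \<inter> Sab 0 1 (Suc ?k) ?l = {}" unfolding Sab_def by auto
  have d2: "(Sab 1 0 ?k (Suc ?l) \<union> Sab 0 1 (Suc ?k) ?l) \<inter> Sab 1 1 ?k ?l = {}" unfolding Sab_def by auto
  have "Qs (F # A) (G # B) = sum ?g (QSh (Suc ?k) (Suc ?l))"
    unfolding Qs_def by simp
  also have "\<dots> = sum ?g (Sab 1 0 ?k (Suc ?l) \<union> Sab 0 1 (Suc ?k) ?l \<union> Sab 1 1 ?k ?l)"
    unfolding QSh_Suc_Suc ..
  also have "\<dots> = sum ?g (Sab 1 0 ?k (Suc ?l) \<union> Sab 0 1 (Suc ?k) ?l) + sum ?g (Sab 1 1 ?k ?l)"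
    by (rule sum.union_disjoint) (use fin d2 in auto)
  also have "sum ?g (Sab 1 0 ?k (Suc ?l) \<union> Sab 0 1 (Suc ?k) ?l) = sum ?g (Sab 1 0 ?k (Suc ?l)) + sum ?g (Sab 0 1 (Suc ?k) ?l)"
    by (rule sum.union_disjoint) (use fin d1 in auto)
  also have "sum ?g (Sab 1 0 ?k (Suc ?l)) = lin_map (\<lambda>u. Node (F @ [u])) (Qs A (G # B))"
  proof -
    have "sum ?g (Sab 1 0 ?k (Suc ?l)) = (\<Sum>\<tau>\<in>Sab 1 0 ?k (length (G # B)).
      Poly_Mapping.single (Qt \<tau> (replicate 1 F @ A) (replicate 0 G @ (G # B))) 1)" by simp
    also have "\<dots> = lin_map (\<lambda>u. Node (concat (replicate 1 F) @ [u] @ concat (replicate 0 G))) (Qs A (G # B))"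
      by (rule sum_Sab) auto
    finally show ?thesis by simp
  qed
  also have "sum ?g (Sab 0 1 (Suc ?k) ?l) = lin_map (\<lambda>u. Node (u # G)) (Qs (F # A) B)"
  proof -
    have "sum ?g (Sab 0 1 (Suc ?k) ?l) = (\<Sum>\<tau>\<in>Sab 0 1 (length (F # A)) ?l.
      Poly_Mapping.single (Qt \<tau> (replicate 0 F @ (F # A)) (replicate 1 G @ B)) 1)" by simp
    also have "\<dots> = lin_map (\<lambda>u. Node (concat (replicate 0 F) @ [u] @ concat (replicate 1 G))) (Qs (F # A) B)"
      by (rule sum_Sab) auto
    finally show ?thesis by simp
  qed
  also have "sum ?g (Sab 1 1 ?k ?l) = lin_map (\<lambda>u. Node (F @ [u] @ G)) (Qs A B)"
  proof -
    have "sum ?g (Sab 1 1 ?k ?l) = (\<Sum>\<tau>\<in>Sab 1 1 ?k ?l.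
      Poly_Mapping.single (Qt \<tau> (replicate 1 F @ A) (replicate 1 G @ B)) 1)" by simp
    also have "\<dots> = lin_map (\<lambda>u. Node (concat (replicate 1 F) @ [u] @ concat (replicate 1 G))) (Qs A B)"
      by (rule sum_Sab) auto
    finally show ?thesis by simp
  qed
  finally show ?thesis by (simp add: add_ac)
qed

lemma Qs_lcomb: "valid s \<Longrightarrow> Qs [] (lcomb s) = Poly_Mapping.single s 1"
proof (induction s rule: lcomb.induct)
  case 1 then show ?case by (simp add: Qs_nil_nil)
next
  case (2 ts)
  then have ne: "ts \<noteq> []" and v: "valid (hd ts)" by (cases ts; auto)+
  then show ?case using 2 by (simp add: Qs_nil_cons lin_map_single)
qed

lemma Qs_rcomb: "valid t \<Longrightarrow> Qs (rcomb t) [] = Poly_Mapping.single t 1"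
proof (induction t rule: rcomb.induct)
  case 1 then show ?case by (simp add: Qs_nil_nil)
next
  case (2 ts)
  then have ne: "ts \<noteq> []" by auto
  then have v: "valid (last ts)" using 2 by auto
  then show ?case using 2 ne by (simp add: Qs_cons_nil lin_map_single)
qed

lemma star_Qs: "valid t \<Longrightarrow> valid s \<Longrightarrow> star t s = Qs (rcomb t) (lcomb s)"
proof (induction t s rule: star.induct)
  case (1 y) then show ?case by (simp add: Qs_lcomb)
next
  case (2 xs)
  have "Qs (rcomb (Node xs)) [] = Poly_Mapping.single (Node xs) 1" by (rule Qs_rcomb) (rule 2(1))
  then show ?case by (simp only: star.simps lcomb.simps) (rule sym)
next
  case (3 xs ys)
  then have ne: "xs \<noteq> []" "ys \<noteq> []" by auto
  then have v: "valid (last xs)" "valid (hd ys)" using 3 by auto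
  show ?case using 3 ne v by (simp add: Qs_cons_cons)
qed


theorem mainTheorem8:
  fixes t s :: tree
  assumes "valid t" and "valid s" and "t \<noteq> Leaf" and "s \<noteq> Leaf"
  shows "(star t s :: tree \<Rightarrow>\<^sub>0 'k::field) =
         (\<Sum>\<sigma>\<in>QSh (length (rcomb t)) (length (lcomb s)). Poly_Mapping.single (qsh_tree \<sigma> t s) 1)"
  using star_Qs[OF assms(1,2)] by (simp add: Qs_def qsh_tree_Qt)

end
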